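(* Let $\Gamma=(V,E)$ be a strongly connected digraph with diameter $D\ge 2$. Let $X=\{x_1,\ldots,x_r\}\subset V$ with $r\ge 2$ be such that all vertices of $X$ have the same set of in-neighbors, say $Y=\Gamma^-(x_i)$ for $i=1,\ldots,r$, and let $Z=\Gamma^+(X)$. Let $\Gamma'$ be a digraph obtained from $\Gamma$ by replacing the set of arcs $e(X,Z)$ by another set of arcs $e'(X,Z)$ (all other arcs unchanged) such that: (i) $e'(Y,X)\cap e'(X,Z)=e(Y,X)\cap e(X,Z)$, where $e'(Y,X)$ denotes the set of arcs from $Y$ to $X$ in $\Gamma'$; (ii) considering the arcs that are not loops, every vertex of $X$ has some out-going arc in $\Gamma'$ to a vertex of $Z$, and every vertex of $Z$ has some in-going arc in $\Gamma'$ from a vertex of $X$. Assume moreover that every vertex of $Z$ has the same number of in-going arcs in $\Gamma'$ as in $\Gamma$, i.e. $|\Gamma'^-(v)|=|\Gamma^-(v)|$ for every $v\in Z$. Then $\Gamma$ and $\Gamma'$ are cospectral, i.e. their adjacency matrices have the same characteristic polynomial.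
   Context: For a vertex $v$, $\Gamma^-(v)$, $\Gamma'^-(v)$ denote the sets of in-neighbors of $v$ in $\Gamma$, $\Gamma'$ respectively, and $\Gamma^+(v)$ the out-neighbors; $\Gamma^+(U)$ is the set of vertices adjacent from some vertex of $U$. For $X,Y\subset V$, $e(X,Y)$ denotes the set of arcs from $X$ to $Y$ in $\Gamma$ ($e'(X,Y)$ in $\Gamma'$). A loop is an arc from a vertex to itself. The adjacency matrix $A=(a_{uv})$ has $a_{uv}=1$ if $(u,v)$ is an arc and $0$ otherwise. *)

theory Defs
  imports "HOL-Analysis.Analysis" "HOL-Computational_Algebra.Polynomial"
begin

text \<open>A digraph on the finite vertex type 'v (vertex set = UNIV) is given by its arc
  set E :: ('v \<times> 'v) set; loops (v,v) are allowed.\<close>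

definition in_nbrs :: "('v \<times> 'v) set \<Rightarrow> 'v \<Rightarrow> 'v set" where
  "in_nbrs E v = {u. (u, v) \<in> E}"

definition out_nbrs :: "('v \<times> 'v) set \<Rightarrow> 'v \<Rightarrow> 'v set" where
  "out_nbrs E v = {w. (v, w) \<in> E}"

definition out_set :: "('v \<times> 'v) set \<Rightarrow> 'v set \<Rightarrow> 'v set" where
  "out_set E U = {w. \<exists>u\<in>U. (u, w) \<in> E}"

definition arcs_between :: "('v \<times> 'v) set \<Rightarrow> 'v set \<Rightarrow> 'v set \<Rightarrow> ('v \<times> 'v) set" where
  "arcs_between E X Y = {(u, w). (u, w) \<in> E \<and> u \<in> X \<and> w \<in> Y}"

definition strongly_connected :: "('v \<times> 'v) set \<Rightarrow> bool" where
  "strongly_connected E \<longleftrightarrow> (\<forall>u v. (u, v) \<in> E\<^sup>*)"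

definition dg_dist :: "('v \<times> 'v) set \<Rightarrow> 'v \<Rightarrow> 'v \<Rightarrow> nat" where
  "dg_dist E u v = (LEAST n. (u, v) \<in> E ^^ n)"

definition diameter :: "('v::finite \<times> 'v) set \<Rightarrow> nat" where
  "diameter E = Max {dg_dist E u v | u v. True}"

definition adj_matrix :: "('v::finite \<times> 'v) set \<Rightarrow> real ^'v ^'v" where
  "adj_matrix E = (\<chi> u v. if (u, v) \<in> E then 1 else 0)"

definition char_poly :: "real ^'n ^'n \<Rightarrow> real poly" where
  "char_poly A = det (\<chi> i j. (if i = j then [:0, 1:] else 0) - [: A $ i $ j :])"

definition cospectral :: "('v::finite \<times> 'v) set \<Rightarrow> ('v \<times> 'v) set \<Rightarrow> bool" where
  "cospectral E E' \<longleftrightarrow> char_poly (adj_matrix E) = char_poly (adj_matrix E')"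

end

theory Submission imports Defs begin

lemma det_one_row:
  fixes A :: "'a::comm_ring_1^'n^'n"
  assumes ld: "\<And>i j. i \<noteq> j \<Longrightarrow> i \<noteq> k \<Longrightarrow> A$i$j = 0"
  shows "det A = prod (\<lambda>i. A$i$i) (UNIV::'n set)"
proof -
  let ?U = "UNIV:: 'n set"
  let ?PU = "{p. p permutes ?U}"
  let ?pp = "\<lambda>p. of_int (sign p) * prod (\<lambda>i. A$i$p i) (UNIV :: 'n set)"
  have fU: "finite ?U" by simp
  from finite_permutations[OF fU] have fPU: "finite ?PU" .
  have id0: "{id} \<subseteq> ?PU"
    by (auto simp: permutes_id)
  have p0: "\<forall>p \<in> ?PU - {id}. ?pp p = 0"
  proof
    fix p
    assume p: "p \<in> ?PU - {id}"
    have "\<exists>i. p i \<noteq> i \<and> i \<noteq> k"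
    proof (rule ccontr)
      assume "\<not> ?thesis"
      then have fx: "\<And>i. i \<noteq> k \<Longrightarrow> p i = i" by blast
      have inj: "inj p" using p permutes_inj by blast
      have "p k = k"
      proof (rule ccontr)
        assume "p k \<noteq> k"
        then have "p (p k) = p k" using fx by blast
        then have "p k = k" using inj by (meson injD)
        then show False using \<open>p k \<noteq> k\<close> by simp
      qed
      then have "p = id" using fx by (metis eq_id_iff)
      then show False using p by simp
    qed
    then obtain i where i: "p i \<noteq> i" "i \<noteq> k" by blast
    with ld have "\<exists>i \<in> ?U. A$i$p i = 0"
      by (metis UNIV_I)
    with prod_zero [OF fU] show "?pp p = 0"
      by force
  qed
  from sum.mono_neutral_cong_left[OF fPU id0 p0] show ?thesis
    unfolding det_def by (simp add: sign_id)
qed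

lemma det_cols_eq:
  fixes N N' :: "'a::comm_ring_1^'n^'n"
  assumes rows: "\<And>i j. i \<notin> S \<Longrightarrow> N$i$j = N'$i$j"
    and colN: "\<And>i j. j\<in>S \<Longrightarrow> N$i$j = (if i=j then d else 0)"
    and colN': "\<And>i j. j\<in>S \<Longrightarrow> N'$i$j = (if i=j then d else 0)"
  shows "det N = det N'"
  unfolding det_def
proof (rule sum.cong[OF refl])
  fix p assume "p \<in> {p. p permutes (UNIV::'n set)}"
  then have p: "p permutes (UNIV::'n set)" by simp
  have "prod (\<lambda>i. N$i$p i) UNIV = prod (\<lambda>i. N'$i$p i) UNIV"
  proof (cases "\<forall>i\<in>S. p i = i")
    case True
    show ?thesis
    proof (rule prod.cong[OF refl])
      fix i
      show "N$i$p i = N'$i$p i"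
      proof (cases "i \<in> S")
        case True2: True
        then have pi: "p i = i" using True by blast
        show ?thesis unfolding pi using colN[OF True2, of i] colN'[OF True2, of i] by simp
      next
        case False
        then show ?thesis by (rule rows)
      qed
    qed
  next
    case False
    then obtain i where i: "i \<in> S" "p i \<noteq> i" by blast
    define k where "k = inv p i"
    have pk: "p k = i" unfolding k_def using permutes_inverses(1)[OF p] by blast
    have ki: "k \<noteq> i" using pk i by auto
    have z1: "N$k$p k = 0" using colN[OF i(1), of k] ki by (simp add: pk)
    have z2: "N'$k$p k = 0" using colN'[OF i(1), of k] ki by (simp add: pk)
    have "prod (\<lambda>i. N$i$p i) UNIV = 0" by (rule prod_zero) (use z1 in auto)
    moreover have "prod (\<lambda>i. N'$i$p i) UNIV = 0" by (rule prod_zero) (use z2 in auto)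
    ultimately show ?thesis by simp
  qed
  then show "of_int (sign p) * prod (\<lambda>i. N$i$p i) UNIV = of_int (sign p) * prod (\<lambda>i. N'$i$p i) UNIV"
    by simp
qed


lemma core:
  fixes A B :: "real^'v::finite^'v" and X :: "'v set"
  assumes x1: "x1 \<in> X"
    and colA: "\<And>u x. x \<in> X \<Longrightarrow> A$u$x = A$u$x1"
    and colB: "\<And>u x. x \<in> X \<Longrightarrow> B$u$x = B$u$x1"
    and rows: "\<And>u v. u \<notin> X \<Longrightarrow> A$u$v = B$u$v"
    and sums: "\<And>v. (\<Sum>k\<in>X. A$k$v) = (\<Sum>k\<in>X. B$k$v)"
  shows "char_poly A = char_poly B"
proof -
  define c :: "real poly" where "c = [:0,1:]"
  define R0 where "R0 = X - {x1}"
  define M :: "real^'v^'v \<Rightarrow> real poly^'v^'v" where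
    "M C = (\<chi> i j. (if i = j then c else 0) - [: C$i$j :])" for C
  define L :: "real poly^'v^'v" where
    "L = (\<chi> i k. (if i = k then 1 else 0) + (if i = x1 \<and> k \<in> R0 then 1 else 0))"
  define R :: "real poly^'v^'v" where
    "R = (\<chi> k j. (if k = j then 1 else 0) - (if k = x1 \<and> j \<in> R0 then 1 else 0))"
  have x1R0: "x1 \<notin> R0" unfolding R0_def by auto
  have nx: "\<And>i. (i = x1 \<and> i \<in> R0) = False" using x1R0 by auto
  have Ld: "L$i$i = 1" for i using x1R0 by (cases "i = x1") (simp_all add: L_def)
  have Rd: "R$i$i = 1" for i using x1R0 by (cases "i = x1") (simp_all add: R_def)
  have detL: "det L = 1"
  proof -
    have "det L = prod (\<lambda>i. L$i$i) UNIV" by (rule det_one_row[where k = x1]) (simp add: L_def)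
    also have "\<dots> = 1" by (simp add: Ld)
    finally show ?thesis .
  qed
  have detR: "det R = 1"
  proof -
    have "det R = prod (\<lambda>i. R$i$i) UNIV" by (rule det_one_row[where k = x1]) (simp add: R_def)
    also have "\<dots> = 1" by (simp add: Rd)
    finally show ?thesis .
  qed
  have cp: "char_poly C = det (M C)" for C unfolding char_poly_def M_def c_def by simp
  have P: "(L ** M C)$i$j = (if i = x1 then (\<Sum>k\<in>X. M C$k$j) else M C$i$j)" for C i j
  proof -
    have "(L ** M C)$i$j = (\<Sum>k\<in>UNIV. L$i$k * M C$k$j)"
      by (simp add: matrix_matrix_mult_def)
    also have "\<dots> = (\<Sum>k\<in>UNIV. (if i = k then M C$k$j else 0)) + (\<Sum>k\<in>UNIV. (if i = x1 \<and> k \<in> R0 then M C$k$j else 0))"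
      unfolding sum.distrib[symmetric] by (rule sum.cong) (auto simp: L_def)
    also have "\<dots> = M C$i$j + (if i = x1 then (\<Sum>k\<in>R0. M C$k$j) else 0)"
      by (simp add: sum.If_cases)
    also have "\<dots> = (if i = x1 then (\<Sum>k\<in>X. M C$k$j) else M C$i$j)"
      using x1 by (simp add: R0_def sum.remove[of X x1])
    finally show ?thesis .
  qed
  have N: "(L ** M C ** R)$i$j = (L ** M C)$i$j - (if j \<in> R0 then (L ** M C)$i$x1 else 0)" for C i j
  proof -
    have "(L ** M C ** R)$i$j = (\<Sum>k\<in>UNIV. (L ** M C)$i$k * R$k$j)"
      by (simp add: matrix_matrix_mult_def)
    also have "\<dots> = (\<Sum>k\<in>UNIV. (if k = j then (L ** M C)$i$k else 0)) - (\<Sum>k\<in>UNIV. (if k = x1 \<and> j \<in> R0 then (L ** M C)$i$k else 0))"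
      unfolding sum_subtractf[symmetric] by (rule sum.cong) (auto simp: R_def)
    also have "\<dots> = (L ** M C)$i$j - (if j \<in> R0 then (L ** M C)$i$x1 else 0)"
      by simp
    finally show ?thesis .
  qed
  have colN: "(L ** M C ** R)$i$j = (if i = j then c else 0)"
    if j: "j \<in> R0" and colC: "\<And>u x. x \<in> X \<Longrightarrow> C$u$x = C$u$x1" for C i j
  proof -
    have jX: "j \<in> X" "j \<noteq> x1" using j unfolding R0_def by auto
    have d: "M C$k$j - M C$k$x1 = (if k = j then c else 0) - (if k = x1 then c else 0)" for k
      using colC[OF jX(1), of k] unfolding M_def by simp
    show ?thesis
    proof (cases "i = x1")
      case True
      have "(\<Sum>k\<in>X. M C$k$j) - (\<Sum>k\<in>X. M C$k$x1) = (\<Sum>k\<in>X. M C$k$j - M C$k$x1)"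
        by (simp add: sum_subtractf)
      also have "\<dots> = (\<Sum>k\<in>X. (if k = j then c else 0) - (if k = x1 then c else 0))"
        using d by simp
      also have "\<dots> = 0" using jX x1 by (simp add: sum_subtractf)
      finally show ?thesis using True N[of C i j] P j jX by simp
    next
      case False
      then show ?thesis using N[of C i j] P j d[of i] by simp
    qed
  qed
  have rowsN: "(L ** M A ** R)$i$j = (L ** M B ** R)$i$j" if i: "i \<notin> R0" for i j
  proof -
    have PP: "(L ** M A)$i$k = (L ** M B)$i$k" for k
    proof (cases "i = x1")
      case True
      have "(\<Sum>k'\<in>X. M A$k'$k) = (\<Sum>k'\<in>X. (if k' = k then c else 0)) - (\<Sum>k'\<in>X. [:A$k'$k:])"
        by (simp add: M_def sum_subtractf)
      also have "\<dots> = (\<Sum>k'\<in>X. (if k' = k then c else 0)) - [:\<Sum>k'\<in>X. A$k'$k:]"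
        by (simp add: sum_to_poly)
      also have "\<dots> = (\<Sum>k'\<in>X. (if k' = k then c else 0)) - (\<Sum>k'\<in>X. [:B$k'$k:])"
        by (simp add: sums sum_to_poly)
      also have "\<dots> = (\<Sum>k'\<in>X. M B$k'$k)"
        by (simp add: M_def sum_subtractf)
      finally show ?thesis using True P by simp
    next
      case False
      then have "i \<notin> X" using i unfolding R0_def by auto
      then show ?thesis using False P rows unfolding M_def by simp
    qed
    show ?thesis using N PP by simp
  qed
  have "det (M A) = det (L ** M A ** R)" by (simp add: det_mul detL detR)
  also have "\<dots> = det (L ** M B ** R)"
  proof (rule det_cols_eq[where S = R0 and d = c])
    show "\<And>i j. i \<notin> R0 \<Longrightarrow> (L ** M A ** R)$i$j = (L ** M B ** R)$i$j" by (rule rowsN)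
    show "(L ** M A ** R)$i$j = (if i = j then c else 0)" if "j \<in> R0" for i j
      by (rule colN[OF that]) (rule colA)
    show "(L ** M B ** R)$i$j = (if i = j then c else 0)" if "j \<in> R0" for i j
      by (rule colN[OF that]) (rule colB)
  qed
  also have "\<dots> = det (M B)" by (simp add: det_mul detL detR)
  finally show ?thesis by (simp add: cp)
qed


lemma sum_ind_card: "finite X \<Longrightarrow> (\<Sum>k\<in>X. (if P k then 1 else 0) :: real) = real (card {k\<in>X. P k})"
  by (simp add: sum.inter_filter[symmetric])

theorem mainTheorem4:
  fixes E E' :: "('v::finite \<times> 'v) set"
    and X Y Z :: "'v set"
  assumes sc: "strongly_connected E"
    and diam: "diameter E \<ge> 2"
    and X_card: "card X \<ge> 2"
    and Y_def: "\<forall>x\<in>X. in_nbrs E x = Y"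
    and Z_def: "Z = out_set E X"
    and replace: "E' - arcs_between E' X Z = E - arcs_between E X Z"
    and cond_i: "arcs_between E' Y X \<inter> arcs_between E' X Z
                 = arcs_between E Y X \<inter> arcs_between E X Z"
    and cond_ii_out: "\<forall>x\<in>X. \<exists>z\<in>Z. z \<noteq> x \<and> (x, z) \<in> E'"
    and cond_ii_in: "\<forall>z\<in>Z. \<exists>x\<in>X. x \<noteq> z \<and> (x, z) \<in> E'"
    and indeg: "\<forall>v\<in>Z. card (in_nbrs E' v) = card (in_nbrs E v)"
  shows "cospectral E E'"
proof -
  have same: "(u, v) \<in> E' \<longleftrightarrow> (u, v) \<in> E" if "\<not> (u \<in> X \<and> v \<in> Z)" for u v
  proof -
    have "(u, v) \<in> E' - arcs_between E' X Z \<longleftrightarrow> (u, v) \<in> E - arcs_between E X Z"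
      using replace by simp
    with that show ?thesis by (simp add: arcs_between_def)
  qed
  have "X \<noteq> {}" using X_card by auto
  then obtain x1 where x1: "x1 \<in> X" by blast
  have inE: "(u, x) \<in> E \<longleftrightarrow> u \<in> Y" if "x \<in> X" for u x
    using Y_def that unfolding in_nbrs_def by auto
  have inE'set: "in_nbrs E' x = Y" if x: "x \<in> X" for x
  proof (cases "x \<in> Z")
    case False
    have "\<And>u. (u, x) \<in> E' \<longleftrightarrow> (u, x) \<in> E" using same False by blast
    then show ?thesis using inE[OF x] unfolding in_nbrs_def by auto
  next
    case True
    have sub: "in_nbrs E x \<subseteq> in_nbrs E' x"
    proof
      fix u assume "u \<in> in_nbrs E x"
      then have uE: "(u, x) \<in> E" by (simp add: in_nbrs_def)
      show "u \<in> in_nbrs E' x"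
      proof (cases "u \<in> X")
        case False
        then have "(u, x) \<in> E'" using same[of u x] uE by blast
    then show ?thesis by (simp add: in_nbrs_def)
      next
        case True
        have "u \<in> Y" using uE inE x by blast
        then have "(u, x) \<in> arcs_between E Y X \<inter> arcs_between E X Z"
          using uE True x \<open>x \<in> Z\<close> by (simp add: arcs_between_def)
        then have "(u, x) \<in> arcs_between E' Y X \<inter> arcs_between E' X Z" using cond_i by simp
        then show ?thesis by (simp add: arcs_between_def in_nbrs_def)
      qed
    qed
    have "in_nbrs E x = in_nbrs E' x"
      by (rule card_subset_eq[OF finite sub]) (use indeg True in simp)
    then show ?thesis using Y_def x by simp
  qed
  have inE': "(u, x) \<in> E' \<longleftrightarrow> u \<in> Y" if "x \<in> X" for u x
    using inE'set[OF that] unfolding in_nbrs_def by auto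
  have cardX: "card {k\<in>X. (k, v) \<in> E} = card {k\<in>X. (k, v) \<in> E'}" for v
  proof (cases "v \<in> Z")
    case False
    have "\<And>k. ((k, v) \<in> E') = ((k, v) \<in> E)" using same False by blast
    then show ?thesis by simp
  next
    case True
    have "\<And>k. k \<notin> X \<Longrightarrow> ((k, v) \<in> E') = ((k, v) \<in> E)" using same by blast
    then have d: "in_nbrs E v - X = in_nbrs E' v - X" unfolding in_nbrs_def by auto
    have "card (in_nbrs E v) = card (in_nbrs E v \<inter> X) + card (in_nbrs E v - X)"
      by (rule card_Int_Diff) simp
    moreover have "card (in_nbrs E' v) = card (in_nbrs E' v \<inter> X) + card (in_nbrs E' v - X)"
      by (rule card_Int_Diff) simp
    ultimately have "card (in_nbrs E v \<inter> X) = card (in_nbrs E' v \<inter> X)"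
      using indeg True d by simp
    moreover have "in_nbrs E v \<inter> X = {k\<in>X. (k, v) \<in> E}" "in_nbrs E' v \<inter> X = {k\<in>X. (k, v) \<in> E'}"
      unfolding in_nbrs_def by auto
    ultimately show ?thesis by simp
  qed
  show ?thesis
    unfolding cospectral_def
  proof (rule core[OF x1])
    show "adj_matrix E $ u $ x = adj_matrix E $ u $ x1" if "x \<in> X" for u x
      using inE[OF that] inE[OF x1] by (simp add: adj_matrix_def)
    show "adj_matrix E' $ u $ x = adj_matrix E' $ u $ x1" if "x \<in> X" for u x
      using inE'[OF that] inE'[OF x1] by (simp add: adj_matrix_def)
    show "adj_matrix E $ u $ v = adj_matrix E' $ u $ v" if "u \<notin> X" for u v
    proof -
      have "((u, v) \<in> E') = ((u, v) \<in> E)" using same[of u v] that by blast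
      then show ?thesis by (simp add: adj_matrix_def)
    qed
    show "(\<Sum>k\<in>X. adj_matrix E $ k $ v) = (\<Sum>k\<in>X. adj_matrix E' $ k $ v)" for v
      using cardX[of v] by (simp add: adj_matrix_def sum_ind_card)
  qed
qed

end
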